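(* Let $N\ge 1$ be an integer, let $\gamma>0$, $\upsilon\in(0,1]$, $P_b>0$, $h>0$, $T>0$, and let $p_1>p_2>\cdots>p_N>0$ with $p_1\le1$. Consider Problem P2: minimize $\sum_{k=1}^N \gamma p_k f_k^2$ over $(f_1,\dots,f_N,y_1,\dots,y_N)$ subject to $\sum_{k=1}^m \gamma f_k^2 \le \upsilon P_b h \sum_{k=1}^m y_k$ for $m=1,\dots,N$, $\sum_{k=1}^N y_k\le T$, and $f_k>0$, $\frac{1}{f_k}-y_k\le 0$ for all $k$; Problem P3: the same problem with the first $N-1$ energy harvesting constraints removed, i.e. minimize $\sum_{k=1}^N \gamma p_k f_k^2$ subject to $\sum_{k=1}^N \gamma f_k^2 \le \upsilon P_b h \sum_{k=1}^N y_k$, $\sum_{k=1}^N y_k\le T$, and $f_k>0$, $\frac{1}{f_k}-y_k\le 0$ for all $k$. Then the solution of Problem P2 can be obtained by solving Problem P3: an optimal solution of P3 is an optimal solution of P2.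
   Context: $f_k$ is the CPU frequency of the $k$-th cycle, $p_k$ the probability that the $k$-th cycle is executed (decreasing in $k$), $\gamma f^2$ the energy per cycle at frequency $f$, $\upsilon P_b h$ the harvested power and $T$ the deadline. *)

theory Defs
  imports Complex_Main
begin

definition objective :: "nat \<Rightarrow> real \<Rightarrow> (nat \<Rightarrow> real) \<Rightarrow> (nat \<Rightarrow> real) \<Rightarrow> real" where
  "objective N \<gamma> p f = (\<Sum>k=1..N. \<gamma> * p k * (f k)^2)"

definition feasible_P2 :: "nat \<Rightarrow> real \<Rightarrow> real \<Rightarrow> real \<Rightarrow> real \<Rightarrow> real \<Rightarrow>
    (nat \<Rightarrow> real) \<Rightarrow> (nat \<Rightarrow> real) \<Rightarrow> bool" where
  "feasible_P2 N \<gamma> \<upsilon> Pb h T f y \<longleftrightarrow>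
     (\<forall>m\<in>{1..N}. (\<Sum>k=1..m. \<gamma> * (f k)^2) \<le> \<upsilon> * Pb * h * (\<Sum>k=1..m. y k)) \<and>
     (\<Sum>k=1..N. y k) \<le> T \<and>
     (\<forall>k\<in>{1..N}. f k > 0 \<and> 1 / f k - y k \<le> 0)"

definition feasible_P3 :: "nat \<Rightarrow> real \<Rightarrow> real \<Rightarrow> real \<Rightarrow> real \<Rightarrow> real \<Rightarrow>
    (nat \<Rightarrow> real) \<Rightarrow> (nat \<Rightarrow> real) \<Rightarrow> bool" where
  "feasible_P3 N \<gamma> \<upsilon> Pb h T f y \<longleftrightarrow>
     (\<Sum>k=1..N. \<gamma> * (f k)^2) \<le> \<upsilon> * Pb * h * (\<Sum>k=1..N. y k) \<and>
     (\<Sum>k=1..N. y k) \<le> T \<and>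
     (\<forall>k\<in>{1..N}. f k > 0 \<and> 1 / f k - y k \<le> 0)"

definition optimal_P2 where
  "optimal_P2 N \<gamma> \<upsilon> Pb h T p f y \<longleftrightarrow> feasible_P2 N \<gamma> \<upsilon> Pb h T f y \<and>
     (\<forall>f' y'. feasible_P2 N \<gamma> \<upsilon> Pb h T f' y' \<longrightarrow> objective N \<gamma> p f \<le> objective N \<gamma> p f')"

definition optimal_P3 where
  "optimal_P3 N \<gamma> \<upsilon> Pb h T p f y \<longleftrightarrow> feasible_P3 N \<gamma> \<upsilon> Pb h T f y \<and>
     (\<forall>f' y'. feasible_P3 N \<gamma> \<upsilon> Pb h T f' y' \<longrightarrow> objective N \<gamma> p f \<le> objective N \<gamma> p f')"

end

theory Submission
  imports Defs
begin

lemma sum_upd: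
  fixes G :: "'a \<Rightarrow> 'c \<Rightarrow> 'b::ab_group_add"
  assumes "finite A" "i \<in> A"
  shows "(\<Sum>k\<in>A. G k ((f(i:=v)) k)) = (\<Sum>k\<in>A. G k (f k)) - G i (f i) + G i v"
proof -
  have "(\<Sum>k\<in>A. G k ((f(i:=v)) k)) = G i v + (\<Sum>k\<in>A-{i}. G k ((f(i:=v)) k))"
    using sum.remove[OF assms, of "\<lambda>k. G k ((f(i:=v)) k)"] by simp
  also have "(\<Sum>k\<in>A-{i}. G k ((f(i:=v)) k)) = (\<Sum>k\<in>A-{i}. G k (f k))"
    by (rule sum.cong) auto
  also have "\<dots> = (\<Sum>k\<in>A. G k (f k)) - G i (f i)"
    using sum.remove[OF assms, of "\<lambda>k. G k (f k)"] by simp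
  finally show ?thesis by simp
qed

lemma sum_swap:
  fixes G :: "'a \<Rightarrow> 'c \<Rightarrow> 'b::ab_group_add"
  assumes "finite A" "i \<in> A" "j \<in> A" "i \<noteq> j"
  shows "(\<Sum>k\<in>A. G k ((f(i:=a, j:=b)) k)) = (\<Sum>k\<in>A. G k (f k)) - G i (f i) + G i a - G j (f j) + G j b"
  using sum_upd[OF assms(1,3), of G "f(i:=a)" b] sum_upd[OF assms(1,2), of G f a] assms(4)
  by simp

lemma p_dec:
  fixes p :: "nat \<Rightarrow> real"
  assumes "\<forall>k\<in>{1..<N}. p k > p (Suc k)"
  shows "1 \<le> i \<Longrightarrow> i < j \<Longrightarrow> j \<le> N \<Longrightarrow> p i > p j"
proof (induction j)
  case 0 then show ?case by simp
next
  case (Suc j)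
  have s: "p j > p (Suc j)" using assms Suc.prems by auto
  show ?case
  proof (cases "i = j")
    case True then show ?thesis using s by simp
  next
    case False then show ?thesis using Suc s by auto
  qed
qed

theorem lemma3:
  fixes N :: nat and \<gamma> \<upsilon> Pb h T :: real and p f y :: "nat \<Rightarrow> real"
  assumes "N \<ge> 1" and "\<gamma> > 0" and "0 < \<upsilon>" and "\<upsilon> \<le> 1" and "Pb > 0" and "h > 0" and "T > 0"
    and "\<forall>k\<in>{1..<N}. p k > p (Suc k)" and "p N > 0" and "p 1 \<le> 1"
    and "optimal_P3 N \<gamma> \<upsilon> Pb h T p f y"
  shows "optimal_P2 N \<gamma> \<upsilon> Pb h T p f y"
proof -
  define c where "c = \<upsilon> * Pb * h"
  have c: "c > 0" using assms unfolding c_def by simp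
  have F: "feasible_P3 N \<gamma> \<upsilon> Pb h T f y" and opt: "\<And>f' y'. feasible_P3 N \<gamma> \<upsilon> Pb h T f' y' \<Longrightarrow> objective N \<gamma> p f \<le> objective N \<gamma> p f'"
    using assms(11) unfolding optimal_P3_def by auto
  have E: "(\<Sum>k=1..N. \<gamma> * (f k)^2) \<le> c * (\<Sum>k=1..N. y k)"
    and Y: "(\<Sum>k=1..N. y k) \<le> T" and fpos: "\<And>k. k\<in>{1..N} \<Longrightarrow> f k > 0"
    and fy: "\<And>k. k\<in>{1..N} \<Longrightarrow> 1 / f k - y k \<le> 0"
    using F unfolding feasible_P3_def c_def by auto
  have pdec: "\<And>i j. 1 \<le> i \<Longrightarrow> i < j \<Longrightarrow> j \<le> N \<Longrightarrow> p i > p j"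
    using p_dec[OF assms(8)] by blast
  have ppos: "\<And>k. k\<in>{1..N} \<Longrightarrow> p k > 0"
  proof -
    fix k assume k: "k \<in> {1..N}"
    show "p k > 0"
    proof (cases "k = N")
      case True then show ?thesis using assms(9) by simp
    next
      case False then show ?thesis using pdec[of k N] k assms(9) by auto
    qed
  qed
  have tight: "y k = 1 / f k" if k: "k \<in> {1..N}" for k
  proof (rule ccontr)
    assume ne: "y k \<noteq> 1 / f k"
    have fk: "f k > 0" using fpos k by blast
    have ygt: "y k > 1 / f k" using ne fy[OF k] by simp
    have ykpos: "y k > 0" using ygt fk by (smt (verit) divide_pos_pos)
    define f' where "f' = f(k := 1 / y k)"
    have lt: "1 / y k < f k" using ygt fk ykpos by (simp add: field_simps)
    have lt2: "(1 / y k)^2 < (f k)^2"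
      using lt ykpos by (simp add: power_strict_mono)
    have feas: "feasible_P3 N \<gamma> \<upsilon> Pb h T f' y"
    proof -
      have "(\<Sum>j=1..N. \<gamma> * (f' j)^2) = (\<Sum>j=1..N. \<gamma> * (f j)^2) - \<gamma> * (f k)^2 + \<gamma> * (1 / y k)^2"
        unfolding f'_def using sum_upd[of "{1..N}" k "\<lambda>_ x. \<gamma> * x^2" f "1 / y k"] k by simp
      also have "\<dots> \<le> (\<Sum>j=1..N. \<gamma> * (f j)^2)" using lt2 assms(2) by simp
      finally have "(\<Sum>j=1..N. \<gamma> * (f' j)^2) \<le> c * (\<Sum>j=1..N. y j)" using E by simp
      moreover have "\<forall>j\<in>{1..N}. f' j > 0 \<and> 1 / f' j - y j \<le> 0"
        using fpos fy ykpos unfolding f'_def by auto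
      ultimately show ?thesis using Y unfolding feasible_P3_def c_def by simp
    qed
    have "objective N \<gamma> p f' = objective N \<gamma> p f - \<gamma> * p k * (f k)^2 + \<gamma> * p k * (1 / y k)^2"
      unfolding objective_def f'_def using sum_upd[of "{1..N}" k "\<lambda>j x. \<gamma> * p j * x^2" f "1 / y k"] k by simp
    moreover have "\<gamma> * p k * (1 / y k)^2 < \<gamma> * p k * (f k)^2"
      using lt2 assms(2) ppos[OF k] by simp
    ultimately have "objective N \<gamma> p f' < objective N \<gamma> p f" by simp
    with opt[OF feas] show False by simp
  qed
  have mono: "f i \<le> f j" if ij: "1 \<le> i" "i < j" "j \<le> N" for i j
  proof (rule ccontr)
    assume "\<not> f i \<le> f j"
    hence gt: "f j < f i" by simp
    have iN: "i \<in> {1..N}" and jN: "j \<in> {1..N}" using ij by auto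
    have neq: "i \<noteq> j" using ij by simp
    define f' where "f' = f(i := f j, j := f i)"
    define y' where "y' = y(i := y j, j := y i)"
    have s1: "(\<Sum>k=1..N. \<gamma> * (f' k)^2) = (\<Sum>k=1..N. \<gamma> * (f k)^2)"
      unfolding f'_def using sum_swap[of "{1..N}" i j "\<lambda>_ x. \<gamma> * x^2" f "f j" "f i"] iN jN neq by simp
    have s2: "(\<Sum>k=1..N. y' k) = (\<Sum>k=1..N. y k)"
      unfolding y'_def using sum_swap[of "{1..N}" i j "\<lambda>_ x. x" y "y j" "y i"] iN jN neq by simp
    have feas: "feasible_P3 N \<gamma> \<upsilon> Pb h T f' y'"
    proof -
      have "\<forall>k\<in>{1..N}. f' k > 0 \<and> 1 / f' k - y' k \<le> 0"
        using fpos fy iN jN neq unfolding f'_def y'_def by auto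
      then show ?thesis using E Y s1 s2 unfolding feasible_P3_def c_def by simp
    qed
    have "objective N \<gamma> p f' = objective N \<gamma> p f - \<gamma> * p i * (f i)^2 + \<gamma> * p i * (f j)^2
            - \<gamma> * p j * (f j)^2 + \<gamma> * p j * (f i)^2"
      unfolding objective_def f'_def
      using sum_swap[of "{1..N}" i j "\<lambda>k x. \<gamma> * p k * x^2" f "f j" "f i"] iN jN neq by simp
    moreover have "\<gamma> * p i * (f j)^2 + \<gamma> * p j * (f i)^2 < \<gamma> * p i * (f i)^2 + \<gamma> * p j * (f j)^2"
    proof -
      have "(f j)^2 < (f i)^2" using gt fpos[OF jN] by (simp add: power_strict_mono)
      moreover have "p j < p i" using pdec ij by blast
      ultimately have "0 < (p i - p j) * ((f i)^2 - (f j)^2)" by simp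
      hence "0 < \<gamma> * ((p i - p j) * ((f i)^2 - (f j)^2))" using assms(2) by simp
      thus ?thesis by (simp add: algebra_simps)
    qed
    ultimately have "objective N \<gamma> p f' < objective N \<gamma> p f" by simp
    with opt[OF feas] show False by simp
  qed
  have pre: "(\<Sum>k=1..m. \<gamma> * (f k)^2) \<le> c * (\<Sum>k=1..m. y k)" if m: "m \<in> {1..N}" for m
  proof (rule ccontr)
    assume "\<not> ?thesis"
    hence viol: "(\<Sum>k=1..m. \<gamma> * (f k)^2) > (\<Sum>k=1..m. c * y k)" by (simp add: sum_distrib_left)
    have "\<exists>i\<in>{1..m}. \<gamma> * (f i)^2 > c * y i"
    proof (rule ccontr)
      assume "\<not> ?thesis"
      hence "(\<Sum>k=1..m. \<gamma> * (f k)^2) \<le> (\<Sum>k=1..m. c * y k)"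
        by (intro sum_mono) (auto simp: not_less)
      with viol show False by simp
    qed
    then obtain i where i: "i \<in> {1..m}" and gi: "\<gamma> * (f i)^2 > c * y i" by blast
    have iN: "i \<in> {1..N}" using i m by auto
    have rest: "(\<Sum>k=m+1..N. \<gamma> * (f k)^2) \<ge> (\<Sum>k=m+1..N. c * y k)"
    proof (rule sum_mono)
      fix j assume j: "j \<in> {m+1..N}"
      have jN: "j \<in> {1..N}" using j m by auto
      have fij: "f i \<le> f j" using mono[of i j] i j by auto
      have fi: "f i > 0" using fpos iN by blast
      have "c * y j = c / f j" using tight[OF jN] by simp
      also have "\<dots> \<le> c / f i" using fij fi c by (simp add: frac_le)
      also have "\<dots> = c * y i" using tight[OF iN] by simp
      also have "\<dots> < \<gamma> * (f i)^2" using gi .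
      also have "\<dots> \<le> \<gamma> * (f j)^2" using fij fi assms(2) by (simp add: power_mono)
      finally show "c * y j \<le> \<gamma> * (f j)^2" by simp
    qed
    have split: "\<And>g::nat\<Rightarrow>real. sum g {1..N} = sum g {1..m} + sum g {m+1..N}"
    proof -
      fix g :: "nat \<Rightarrow> real"
      have "N = m + (N - m)" using m by simp
      then have "sum g {1..N} = sum g {1..m + (N-m)}" by simp
      also have "\<dots> = sum g {1..m} + sum g {m+1..m+(N-m)}"
        by (rule sum.ub_add_nat) simp
      finally show "sum g {1..N} = sum g {1..m} + sum g {m+1..N}" using m by simp
    qed
    have "(\<Sum>k=1..N. \<gamma> * (f k)^2) > (\<Sum>k=1..N. c * y k)"
      using split[of "\<lambda>k. \<gamma> * (f k)^2"] split[of "\<lambda>k. c * y k"] viol rest by simp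
    with E show False by (simp add: sum_distrib_left)
  qed
  have F2: "feasible_P2 N \<gamma> \<upsilon> Pb h T f y"
    unfolding feasible_P2_def using pre Y fpos fy unfolding c_def by auto
  have "\<And>f' y'. feasible_P2 N \<gamma> \<upsilon> Pb h T f' y' \<Longrightarrow> feasible_P3 N \<gamma> \<upsilon> Pb h T f' y'"
    unfolding feasible_P2_def feasible_P3_def using assms(1) by auto
  then show ?thesis unfolding optimal_P2_def using F2 opt by blast
qed

end
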